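(* For every integer $d>1$, $\lambda^*(d,2^{d-1})=1-2^{-d}$.
   Context: For integers $n\ge d\ge 1$, a $d$-flat in $\mathbb{F}_2^n$ is a set $x_0+U$ with $x_0\in\mathbb{F}_2^n$ and $U$ a $d$-dimensional linear subspace of $\mathbb{F}_2^n$. For $A\subseteq\mathbb{F}_2^n$ and an integer $0\le s\le 2^d$, $\lambda^*(n,d,s,A)$ denotes the fraction of $d$-flats $Q$ in $\mathbb{F}_2^n$ with $|Q\cap A|=s$. Let $\lambda^*(n,d,s)=\max_{A\subseteq\mathbb{F}_2^n}\lambda^*(n,d,s,A)$; this is non-increasing in $n$, and $\lambda^*(d,s)=\lim_{n\to\infty}\lambda^*(n,d,s)$. *)

theory Defs
  imports Complex_Main
begin

text \<open>The vector space F_2^n is modelled as the set of subsets of {..<n}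
  (a vector is identified with its support); addition is symmetric difference.\<close>

definition F2vec :: "nat \<Rightarrow> nat set set" where
  "F2vec n = Pow {..<n}"

definition vadd :: "nat set \<Rightarrow> nat set \<Rightarrow> nat set" where
  "vadd x y = (x - y) \<union> (y - x)"

text \<open>The F_2-linear combination  sum over i in S of v i.\<close>
definition comb :: "(nat \<Rightarrow> nat set) \<Rightarrow> nat set \<Rightarrow> nat set" where
  "comb v S = {j. odd (card {i \<in> S. j \<in> v i})}"

definition lin_indep :: "nat \<Rightarrow> (nat \<Rightarrow> nat set) \<Rightarrow> bool" where
  "lin_indep d v \<longleftrightarrow> (\<forall>S \<subseteq> {..<d}. comb v S = {} \<longrightarrow> S = {})"

definition lin_subspace :: "nat \<Rightarrow> nat set set \<Rightarrow> bool" where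
  "lin_subspace n U \<longleftrightarrow> U \<subseteq> F2vec n \<and> {} \<in> U \<and> (\<forall>x\<in>U. \<forall>y\<in>U. vadd x y \<in> U)"

definition dim_subspace :: "nat \<Rightarrow> nat \<Rightarrow> nat set set \<Rightarrow> bool" where
  "dim_subspace n d U \<longleftrightarrow> lin_subspace n U \<and>
     (\<exists>v. (\<forall>i<d. v i \<in> U) \<and> lin_indep d v \<and> U = {comb v S | S. S \<subseteq> {..<d}})"

definition flats :: "nat \<Rightarrow> nat \<Rightarrow> nat set set set" where
  "flats n d = {Q. \<exists>x0 \<in> F2vec n. \<exists>U. dim_subspace n d U \<and> Q = vadd x0 ` U}"

definition lambdaA :: "nat \<Rightarrow> nat \<Rightarrow> nat \<Rightarrow> nat set set \<Rightarrow> real" where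
  "lambdaA n d s A = real (card {Q \<in> flats n d. card (Q \<inter> A) = s}) / real (card (flats n d))"

definition lambda_n :: "nat \<Rightarrow> nat \<Rightarrow> nat \<Rightarrow> real" where
  "lambda_n n d s = Max {lambdaA n d s A | A. A \<subseteq> F2vec n}"

end

theory Submission
  imports Defs
begin


lemma vadd_comm: "vadd x y = vadd y x" by (auto simp: vadd_def)
lemma vadd_assoc: "vadd (vadd x y) z = vadd x (vadd y z)" by (auto simp: vadd_def)
lemma vadd_self[simp]: "vadd x x = {}" by (auto simp: vadd_def)
lemma vadd_empty[simp]: "vadd x {} = x" "vadd {} x = x" by (auto simp: vadd_def)
lemma vadd_cancel[simp]: "vadd x (vadd x y) = y" "vadd (vadd y x) x = y" by (auto simp: vadd_def)
lemma vadd_eq_empty: "vadd x y = {} \<longleftrightarrow> x = y" by (auto simp: vadd_def)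
lemma vadd_mem: "j \<in> vadd x y \<longleftrightarrow> (j \<in> x) \<noteq> (j \<in> y)" by (auto simp: vadd_def)
lemma F2vec_vadd: "x \<in> F2vec n \<Longrightarrow> y \<in> F2vec n \<Longrightarrow> vadd x y \<in> F2vec n"
  by (auto simp: vadd_def F2vec_def)
lemma finite_F2vec[simp]: "finite (F2vec n)" by (simp add: F2vec_def)
lemma card_F2vec: "card (F2vec n) = 2 ^ n" by (simp add: F2vec_def card_Pow)
lemma empty_F2vec[simp]: "{} \<in> F2vec n" by (simp add: F2vec_def)
lemma F2vec_finite_elem: "x \<in> F2vec n \<Longrightarrow> finite x"
  by (auto simp: F2vec_def intro: finite_subset)

lemma vadd_inj: "inj (vadd x)"
  by (metis injI vadd_cancel(1))

lemma card_symdiff: assumes "finite P" "finite Q"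
  shows "card (vadd P Q) + 2 * card (P \<inter> Q) = card P + card Q"
proof -
  have "vadd P Q = (P - Q) \<union> (Q - P)" by (simp add: vadd_def)
  moreover have "card ((P - Q) \<union> (Q - P)) = card (P - Q) + card (Q - P)"
    by (rule card_Un_disjoint) (use assms in auto)
  moreover have "card P = card (P - Q) + card (P \<inter> Q)"
  proof -
    have "P = (P - Q) \<union> (P \<inter> Q)" by blast
    then have "card P = card ((P - Q) \<union> (P \<inter> Q))" by simp
    also have "\<dots> = card (P - Q) + card (P \<inter> Q)" by (rule card_Un_disjoint) (use assms in auto)
    finally show ?thesis .
  qed
  moreover have "card Q = card (Q - P) + card (P \<inter> Q)"
  proof -
    have "Q = (Q - P) \<union> (P \<inter> Q)" by blast
    then have "card Q = card ((Q - P) \<union> (P \<inter> Q))" by simp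
    also have "\<dots> = card (Q - P) + card (P \<inter> Q)" by (rule card_Un_disjoint) (use assms in auto)
    finally show ?thesis .
  qed
  ultimately show ?thesis by simp
qed

lemma comb_empty[simp]: "comb v {} = {}" by (simp add: comb_def)

lemma comb_vadd: assumes "finite S" "finite T"
  shows "comb v (vadd S T) = vadd (comb v S) (comb v T)"
proof (rule set_eqI)
  fix j
  let ?P = "{i\<in>S. j \<in> v i}" and ?Q = "{i\<in>T. j \<in> v i}"
  have e: "{i \<in> vadd S T. j \<in> v i} = vadd ?P ?Q" by (auto simp: vadd_def)
  have "card (vadd ?P ?Q) + 2 * card (?P \<inter> ?Q) = card ?P + card ?Q"
    by (rule card_symdiff) (use assms in auto)
  then have "odd (card (vadd ?P ?Q)) \<longleftrightarrow> odd (card ?P) \<noteq> odd (card ?Q)"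
    by presburger
  moreover have "j \<in> comb v (vadd S T) \<longleftrightarrow> odd (card (vadd ?P ?Q))"
    unfolding comb_def e[symmetric] by simp
  moreover have "j \<in> vadd (comb v S) (comb v T) \<longleftrightarrow> odd (card ?P) \<noteq> odd (card ?Q)"
    unfolding vadd_mem comb_def by simp
  ultimately show "j \<in> comb v (vadd S T) \<longleftrightarrow> j \<in> vadd (comb v S) (comb v T)"
    by blast
qed

lemma comb_insert: assumes "finite S" "i \<notin> S"
  shows "comb v (insert i S) = vadd (v i) (comb v S)"
proof -
  have "{k. k = i \<and> j \<in> v k} = (if j \<in> v i then {i} else {})" for j by auto
  then have "comb v {i} = v i" by (auto simp: comb_def)
  moreover have "insert i S = vadd {i} S" using assms by (auto simp: vadd_def)
  ultimately show ?thesis using comb_vadd[of "{i}" S v] assms by simp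
qed

lemma comb_subset: "comb v S \<subseteq> (\<Union>i\<in>S. v i)"
proof
  fix j assume "j \<in> comb v S"
  then have "odd (card {i\<in>S. j \<in> v i})" by (auto simp: comb_def)
  then have "{i\<in>S. j \<in> v i} \<noteq> {}" by (metis card.empty even_zero)
  then obtain i where "i \<in> S" "j \<in> v i" by blast
  then show "j \<in> (\<Union>i\<in>S. v i)" by blast
qed

lemma comb_F2vec: "(\<And>i. i \<in> S \<Longrightarrow> v i \<in> F2vec n) \<Longrightarrow> comb v S \<in> F2vec n"
proof -
  assume a: "\<And>i. i \<in> S \<Longrightarrow> v i \<in> F2vec n"
  have "(\<Union>i\<in>S. v i) \<subseteq> {..<n}" using a by (auto simp: F2vec_def)
  then show ?thesis using comb_subset[of v S] by (auto simp: F2vec_def)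
qed




lemma comb_inj:
  assumes "lin_indep d v"
  shows "inj_on (comb v) (Pow {..<d})"
proof (rule inj_onI)
  fix S T assume S: "S \<in> Pow {..<d}" and T: "T \<in> Pow {..<d}" and e: "comb v S = comb v T"
  have fS: "finite S" "finite T" using S T finite_subset by auto
  have "comb v (vadd S T) = {}" using comb_vadd[OF fS, of v] e by simp
  moreover have "vadd S T \<subseteq> {..<d}" using S T by (auto simp: vadd_def)
  ultimately have "vadd S T = {}" using assms by (auto simp: lin_indep_def)
  then show "S = T" by (simp add: vadd_eq_empty)
qed

lemma flatE:
  assumes "Q \<in> flats n d"
  obtains x0 U v where "x0 \<in> F2vec n" "lin_subspace n U" "\<forall>i<d. v i \<in> U" "lin_indep d v"
    "U = comb v ` Pow {..<d}" "Q = vadd x0 ` U"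
proof -
  from assms obtain x0 U where "x0 \<in> F2vec n" "dim_subspace n d U" "Q = vadd x0 ` U"
    by (auto simp: flats_def)
  moreover then obtain v where "lin_subspace n U" "\<forall>i<d. v i \<in> U" "lin_indep d v"
     "U = {comb v S | S. S \<subseteq> {..<d}}" by (auto simp: dim_subspace_def)
  moreover have "{comb v S | S. S \<subseteq> {..<d}} = comb v ` Pow {..<d}" by auto
  ultimately show ?thesis using that[of x0 U v] by simp
qed

lemma flat_subset: "Q \<in> flats n d \<Longrightarrow> Q \<subseteq> F2vec n"
proof (erule flatE)
  fix x0 U v assume "x0 \<in> F2vec n" "lin_subspace n U" "Q = vadd x0 ` U"
  then show "Q \<subseteq> F2vec n" by (auto simp: lin_subspace_def intro!: F2vec_vadd)
qed

lemma flat_card: "Q \<in> flats n d \<Longrightarrow> card Q = 2 ^ d"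
proof (erule flatE)
  fix x0 U v assume "lin_indep d v" "U = comb v ` Pow {..<d}" "Q = vadd x0 ` U"
  then have "card Q = card U" by (simp add: card_image inj_on_subset[OF vadd_inj])
  also have "\<dots> = card (Pow {..<d::nat})" using comb_inj[OF \<open>lin_indep d v\<close>] \<open>U = _\<close>
    by (simp add: card_image)
  also have "\<dots> = 2 ^ d" by (simp add: card_Pow)
  finally show ?thesis .
qed

lemma flats_finite: "finite (flats n d)"
proof -
  have "flats n d \<subseteq> Pow (F2vec n)" using flat_subset by blast
  then show ?thesis by (rule finite_subset) simp
qed

lemma flats_nonempty: assumes "d \<le> n" shows "Pow {..<d} \<in> flats n d"
proof -
  let ?v = "\<lambda>i::nat. {i}"
  have cv: "comb ?v S = S" if "S \<subseteq> {..<d}" for S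
  proof -
    have "{i\<in>S. j \<in> {i}} = (if j \<in> S then {j} else {})" for j by auto
    then show ?thesis by (auto simp: comb_def)
  qed
  have U: "Pow {..<d} = {comb ?v S | S. S \<subseteq> {..<d}}"
  proof (intro set_eqI iffI)
    fix x assume "x \<in> Pow {..<d}"
    then have "x = comb ?v x \<and> x \<subseteq> {..<d}" using cv by simp
    then show "x \<in> {comb ?v S | S. S \<subseteq> {..<d}}" by blast
  next
    fix x assume "x \<in> {comb ?v S | S. S \<subseteq> {..<d}}"
    then obtain S where "x = comb ?v S" "S \<subseteq> {..<d}" by blast
    then show "x \<in> Pow {..<d}" using cv by simp
  qed
  have s1: "Pow {..<d} \<subseteq> F2vec n" using assms unfolding F2vec_def by auto
  have s2: "vadd x y \<in> Pow {..<d}" if "x \<in> Pow {..<d}" "y \<in> Pow {..<d}" for x y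
    using that unfolding vadd_def by blast
  have ls: "lin_subspace n (Pow {..<d})"
    unfolding lin_subspace_def using s1 s2 by blast
  have li: "lin_indep d ?v"
    unfolding lin_indep_def using cv by simp
  have vi: "\<forall>i<d. ?v i \<in> Pow {..<d}" by simp
  have "dim_subspace n d (Pow {..<d})"
    unfolding dim_subspace_def
  proof (intro conjI exI[of _ ?v])
    show "lin_subspace n (Pow {..<d})" by (rule ls)
    show "\<forall>i<d. ?v i \<in> Pow {..<d}" by (rule vi)
    show "lin_indep d ?v" by (rule li)
    show "Pow {..<d} = {comb ?v S | S. S \<subseteq> {..<d}}" by (rule U)
  qed
  moreover have "Pow {..<d} = vadd {} ` Pow {..<d}" by simp
  ultimately show ?thesis unfolding flats_def using empty_F2vec by blast
qed

definition cnt :: "nat \<Rightarrow> nat \<Rightarrow> nat set \<Rightarrow> nat set \<Rightarrow> nat" where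
  "cnt n d x y = card {Q \<in> flats n d. x \<in> Q \<and> y \<in> Q}"

lemma cnt_inv:
  assumes into: "\<And>x. x \<in> F2vec n \<Longrightarrow> f x \<in> F2vec n"
    and inv: "\<And>x. x \<in> F2vec n \<Longrightarrow> f (f x) = x"
    and fl: "\<And>Q. Q \<in> flats n d \<Longrightarrow> f ` Q \<in> flats n d"
    and xy: "x \<in> F2vec n" "y \<in> F2vec n"
  shows "cnt n d x y = cnt n d (f x) (f y)"
proof -
  have ii: "f ` (f ` Q) = Q" if "Q \<in> flats n d" for Q
  proof -
    have QX: "Q \<subseteq> F2vec n" using flat_subset that .
    have "f ` (f ` Q) = (\<lambda>x. f (f x)) ` Q" by (simp add: image_image)
    also have "\<dots> = (\<lambda>x. x) ` Q" using QX inv by (intro image_cong) auto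
    finally show ?thesis by simp
  qed
  let ?A = "{Q \<in> flats n d. x \<in> Q \<and> y \<in> Q}" and ?B = "{Q \<in> flats n d. f x \<in> Q \<and> f y \<in> Q}"
  have "inj_on (\<lambda>Q. f ` Q) ?A"
  proof (rule inj_onI)
    fix Q1 Q2 assume "Q1 \<in> ?A" "Q2 \<in> ?A" "f ` Q1 = f ` Q2"
    then have "f ` (f ` Q1) = f ` (f ` Q2)" "Q1 \<in> flats n d" "Q2 \<in> flats n d" by auto
    then show "Q1 = Q2" using ii by simp
  qed
  moreover have "(\<lambda>Q. f ` Q) ` ?A = ?B"
  proof
    show "(\<lambda>Q. f ` Q) ` ?A \<subseteq> ?B" using fl by auto
    show "?B \<subseteq> (\<lambda>Q. f ` Q) ` ?A"
    proof
      fix Q assume Q: "Q \<in> ?B"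
      then have "f ` Q \<in> flats n d" "f (f x) \<in> f ` Q" "f (f y) \<in> f ` Q" using fl by auto
      then have "f ` Q \<in> ?A" using inv xy by auto
      moreover have "Q = f ` (f ` Q)" using ii Q by auto
      ultimately show "Q \<in> (\<lambda>Q. f ` Q) ` ?A" by blast
    qed
  qed
  ultimately have "card ?B = card ?A" using card_image by fastforce
  then show ?thesis unfolding cnt_def by simp
qed




lemma flatsI: "x0 \<in> F2vec n \<Longrightarrow> dim_subspace n d U \<Longrightarrow> Q = vadd x0 ` U \<Longrightarrow> Q \<in> flats n d"
  unfolding flats_def by blast

lemma trans_flats:
  assumes t: "t \<in> F2vec n" and Q: "Q \<in> flats n d"
  shows "vadd t ` Q \<in> flats n d"
proof -
  from Q obtain x0 U where "x0 \<in> F2vec n" "dim_subspace n d U" "Q = vadd x0 ` U"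
    by (auto simp: flats_def)
  moreover have "vadd t ` vadd x0 ` U = vadd (vadd t x0) ` U"
    by (simp add: image_image vadd_assoc)
  ultimately show ?thesis using t F2vec_vadd by (metis flatsI)
qed

locale linmap =
  fixes n :: nat and L :: "nat set \<Rightarrow> nat set"
  assumes into: "\<And>x. x \<in> F2vec n \<Longrightarrow> L x \<in> F2vec n"
    and inv: "\<And>x. x \<in> F2vec n \<Longrightarrow> L (L x) = x"
    and add: "\<And>x y. x \<in> F2vec n \<Longrightarrow> y \<in> F2vec n \<Longrightarrow> L (vadd x y) = vadd (L x) (L y)"
begin

lemma L0: "L {} = {}"
  using add[of "{}" "{}"] by simp

lemma Lcomb: "finite S \<Longrightarrow> (\<And>i. i \<in> S \<Longrightarrow> v i \<in> F2vec n) \<Longrightarrow> L (comb v S) = comb (L \<circ> v) S"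
proof (induction S rule: finite_induct)
  case empty
  then show ?case by (simp add: L0)
next
  case (insert i S)
  have "L (comb v (insert i S)) = L (vadd (v i) (comb v S))" using insert by (simp add: comb_insert)
  also have "\<dots> = vadd (L (v i)) (L (comb v S))"
    using insert by (intro add comb_F2vec) auto
  also have "\<dots> = vadd ((L \<circ> v) i) (comb (L \<circ> v) S)" using insert by (simp add: comp_def)
  also have "\<dots> = comb (L \<circ> v) (insert i S)" by (rule comb_insert[symmetric]) (use insert in auto)
  finally show ?case .
qed

lemma flats: assumes Q: "Q \<in> flats n d" shows "L ` Q \<in> flats n d"
proof (rule flatE[OF Q])
  fix x0 U v assume x0: "x0 \<in> F2vec n" and ls: "lin_subspace n U" and vU: "\<forall>i<d. v i \<in> U"
    and li: "lin_indep d v" and U: "U = comb v ` Pow {..<d}" and Qe: "Q = vadd x0 ` U"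
  have UX: "U \<subseteq> F2vec n" using ls by (simp add: lin_subspace_def)
  have vX: "v i \<in> F2vec n" if "i < d" for i using vU UX that by auto
  have LU: "L ` U = comb (L \<circ> v) ` Pow {..<d}"
  proof -
    have "L (comb v S) = comb (L \<circ> v) S" if "S \<in> Pow {..<d}" for S
      using that vX by (intro Lcomb) (auto intro: finite_subset)
    then show ?thesis unfolding U image_image by (rule image_cong[OF refl])
  qed
  have ls': "lin_subspace n (L ` U)"
    unfolding lin_subspace_def
  proof (intro conjI ballI)
    show "L ` U \<subseteq> F2vec n" using UX into by auto
    show "{} \<in> L ` U" using ls L0 by (metis image_eqI lin_subspace_def)
    fix a b assume "a \<in> L ` U" "b \<in> L ` U"
    then obtain a' b' where "a' \<in> U" "b' \<in> U" "a = L a'" "b = L b'" by auto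
    moreover have "vadd a' b' \<in> U" using ls \<open>a' \<in> U\<close> \<open>b' \<in> U\<close> by (simp add: lin_subspace_def)
    moreover have "L (vadd a' b') = vadd a b" using add UX \<open>a' \<in> U\<close> \<open>b' \<in> U\<close> \<open>a = L a'\<close> \<open>b = L b'\<close> by auto
    ultimately show "vadd a b \<in> L ` U" by (metis image_eqI)
  qed
  have li': "lin_indep d (L \<circ> v)"
    unfolding lin_indep_def
  proof (intro allI impI)
    fix S assume S: "S \<subseteq> {..<d}" and e: "comb (L \<circ> v) S = {}"
    have "L (comb v S) = {}" using e S vX by (subst Lcomb) (auto intro: finite_subset)
    then have "L (L (comb v S)) = {}" using L0 by simp
    moreover have "comb v S \<in> F2vec n" using S vX by (intro comb_F2vec) auto
    ultimately have "comb v S = {}" using inv by simp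
    then show "S = {}" using li S by (simp add: lin_indep_def)
  qed
  have "dim_subspace n d (L ` U)"
    unfolding dim_subspace_def
  proof (intro conjI exI[of _ "L \<circ> v"])
    show "lin_subspace n (L ` U)" by (rule ls')
    show "lin_indep d (L \<circ> v)" by (rule li')
    show "\<forall>i<d. (L \<circ> v) i \<in> L ` U" using vU by auto
    show "L ` U = {comb (L \<circ> v) S | S. S \<subseteq> {..<d}}" using LU by auto
  qed
  moreover have "L ` Q = vadd (L x0) ` (L ` U)"
    unfolding Qe image_image using add x0 UX by (intro image_cong) auto
  ultimately show ?thesis using into x0 by (metis flatsI)
qed

end

definition sw :: "nat \<Rightarrow> nat \<Rightarrow> nat" where
  "sw i k = (if k = 0 then i else if k = i then 0 else k)"

lemma sw_sw[simp]: "sw i (sw i k) = k" by (simp add: sw_def)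

lemma mem_sw: "k \<in> sw i ` x \<longleftrightarrow> sw i k \<in> x"
  by (metis image_iff sw_sw)

lemma linmap_sw: assumes "i < n" shows "linmap n (\<lambda>x. sw i ` x)"
proof
  fix x assume "x \<in> F2vec n"
  then show "sw i ` x \<in> F2vec n" using assms by (auto simp: F2vec_def sw_def)
  show "sw i ` sw i ` x = x" by (simp add: image_image)
next
  fix x y show "sw i ` vadd x y = vadd (sw i ` x) (sw i ` y)"
    by (auto simp: mem_sw vadd_mem)
qed

definition tv :: "nat set \<Rightarrow> nat set \<Rightarrow> nat set" where
  "tv w x = (if 0 \<in> x then vadd x w else x)"

lemma linmap_tv: assumes "w \<in> F2vec n" "0 \<notin> w" shows "linmap n (tv w)"
proof
  fix x assume "x \<in> F2vec n"
  then show "tv w x \<in> F2vec n" using assms by (auto simp: tv_def intro: F2vec_vadd)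
  show "tv w (tv w x) = x" using assms by (auto simp: tv_def vadd_mem)
next
  fix x y show "tv w (vadd x y) = vadd (tv w x) (tv w y)"
    using assms by (auto simp: tv_def vadd_mem vadd_assoc vadd_comm)
qed

lemma cnt_const:
  assumes n: "n \<ge> 1" and x: "x \<in> F2vec n" and y: "y \<in> F2vec n" and xy: "x \<noteq> y"
  shows "cnt n d x y = cnt n d {} {0}"
proof -
  let ?z = "vadd x y"
  have z: "?z \<in> F2vec n" "?z \<noteq> {}" using x y xy F2vec_vadd vadd_eq_empty by auto
  have "cnt n d x y = cnt n d (vadd x x) (vadd x y)"
    using x y by (intro cnt_inv trans_flats) (auto intro: F2vec_vadd)
  then have c1: "cnt n d x y = cnt n d {} ?z" by simp
  obtain i where i: "i \<in> ?z" using z by auto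
  have "i < n" using i z by (auto simp: F2vec_def)
  then interpret S: linmap n "\<lambda>x. sw i ` x" by (rule linmap_sw)
  let ?z' = "sw i ` ?z"
  have c2: "cnt n d {} ?z = cnt n d {} ?z'"
    using cnt_inv[of n "\<lambda>x. sw i ` x" d "{}" ?z] S.into S.inv S.flats z by simp
  have z': "?z' \<in> F2vec n" "0 \<in> ?z'" using S.into z i by (auto simp: mem_sw sw_def)
  let ?w = "?z' - {0}"
  have w: "?w \<in> F2vec n" "0 \<notin> ?w" using z' by (auto simp: F2vec_def)
  interpret T: linmap n "tv ?w" by (rule linmap_tv[OF w])
  have "cnt n d {} ?z' = cnt n d (tv ?w {}) (tv ?w ?z')"
    using z' T.into T.inv T.flats by (intro cnt_inv) auto
  moreover have "tv ?w {} = {}" "tv ?w ?z' = {0}" using z' by (auto simp: tv_def vadd_def)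
  ultimately show ?thesis using c1 c2 by simp
qed




lemma sum_ind: "finite A \<Longrightarrow> (\<Sum>a\<in>A. if P a then 1 else 0 :: real) = real (card {a\<in>A. P a})"
  by (simp add: sum.If_cases Int_def)

lemma sq_flat:
  assumes Q: "Q \<in> flats n d"
  shows "(\<Sum>x\<in>Q. g x)^2 = (\<Sum>x\<in>F2vec n. \<Sum>y\<in>F2vec n. g x * g y * (if x \<in> Q \<and> y \<in> Q then 1 else 0 :: real))"
proof -
  have QX: "Q \<subseteq> F2vec n" by (rule flat_subset[OF Q])
  have fQ: "finite Q" by (rule finite_subset[OF QX finite_F2vec])
  have "(\<Sum>x\<in>Q. g x)^2 = (\<Sum>x\<in>Q. \<Sum>y\<in>Q. g x * g y)"
    by (simp add: power2_eq_square sum_product)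
  also have "\<dots> = (\<Sum>x\<in>F2vec n. if x \<in> Q then (\<Sum>y\<in>F2vec n. if y \<in> Q then g x * g y else 0) else 0)"
    using QX by (simp add: sum.inter_restrict[symmetric] Int_absorb1 Int_absorb2)
  also have "\<dots> = (\<Sum>x\<in>F2vec n. \<Sum>y\<in>F2vec n. g x * g y * (if x \<in> Q \<and> y \<in> Q then 1 else 0 :: real))"
    by (intro sum.cong refl) (auto intro!: sum.cong)
  finally show ?thesis .
qed

lemma sumsq:
  assumes n: "n \<ge> 1" and g: "\<And>x. x \<in> F2vec n \<Longrightarrow> g x * g x = (1::real)"
  shows "(\<Sum>Q\<in>flats n d. (\<Sum>x\<in>Q. g x)^2) =
     real (card (flats n d)) * 2^d + real (cnt n d {} {0}) * ((\<Sum>x\<in>F2vec n. g x)^2 - 2^n)"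
proof -
  let ?X = "F2vec n" and ?F = "flats n d" and ?c = "real (cnt n d {} {0})"
  have "(\<Sum>Q\<in>?F. (\<Sum>x\<in>Q. g x)^2) = (\<Sum>Q\<in>?F. \<Sum>x\<in>?X. \<Sum>y\<in>?X. g x * g y * (if x \<in> Q \<and> y \<in> Q then 1 else 0 :: real))"
    by (intro sum.cong refl sq_flat)
  also have "\<dots> = (\<Sum>x\<in>?X. \<Sum>y\<in>?X. \<Sum>Q\<in>?F. g x * g y * (if x \<in> Q \<and> y \<in> Q then 1 else 0 :: real))"
    by (subst sum.swap) (subst (2) sum.swap, rule refl)
  also have "\<dots> = (\<Sum>x\<in>?X. \<Sum>y\<in>?X. g x * g y * real (cnt n d x y))"
    by (intro sum.cong refl) (simp add: sum_distrib_left[symmetric] sum_ind flats_finite cnt_def)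
  also have "\<dots> = (\<Sum>x\<in>?X. \<Sum>y\<in>?X. ?c * (g x * g y) + (if x = y then real (cnt n d x x) - ?c else 0))"
  proof (intro sum.cong refl)
    fix x y assume "x \<in> ?X" "y \<in> ?X"
    then show "g x * g y * real (cnt n d x y) = ?c * (g x * g y) + (if x = y then real (cnt n d x x) - ?c else 0)"
      using cnt_const[OF n, of x y d] g[of x] by (cases "x = y") (auto simp: algebra_simps)
  qed
  also have "\<dots> = ?c * (\<Sum>x\<in>?X. g x)^2 + (\<Sum>x\<in>?X. real (cnt n d x x)) - ?c * 2^n"
    by (simp add: sum.distrib sum_distrib_left[symmetric] power2_eq_square sum_product
        sum_subtractf card_F2vec)
  also have "(\<Sum>x\<in>?X. real (cnt n d x x)) = real (card ?F) * 2^d"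
  proof -
    have "(\<Sum>x\<in>?X. real (cnt n d x x)) = (\<Sum>x\<in>?X. \<Sum>Q\<in>?F. if x \<in> Q then 1 else 0 :: real)"
      by (simp add: sum_ind flats_finite cnt_def)
    also have "\<dots> = (\<Sum>Q\<in>?F. \<Sum>x\<in>?X. if x \<in> Q then 1 else 0 :: real)" by (rule sum.swap)
    also have "\<dots> = (\<Sum>Q\<in>?F. 2^d)"
    proof (intro sum.cong refl)
      fix Q assume Q: "Q \<in> ?F"
      have "{x\<in>?X. x \<in> Q} = Q" using flat_subset[OF Q] by auto
      then show "(\<Sum>x\<in>?X. if x \<in> Q then 1 else 0 :: real) = 2^d"
        using flat_card[OF Q] by (simp add: sum_ind)
    qed
    finally show ?thesis by simp
  qed
  finally show ?thesis by (simp add: algebra_simps)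
qed




definition gA :: "nat set set \<Rightarrow> nat set \<Rightarrow> real" where
  "gA A x = (if x \<in> A then -1 else 1)"

lemma gA_sq: "gA A x * gA A x = 1" by (simp add: gA_def)

lemma sum_gA: "finite Z \<Longrightarrow> (\<Sum>x\<in>Z. gA A x) = real (card Z) - 2 * real (card (Z \<inter> A))"
proof -
  assume f: "finite Z"
  have "(\<Sum>x\<in>Z. gA A x) = (\<Sum>x\<in>Z. 1 - 2 * (if x \<in> A then 1 else 0 :: real))"
    by (intro sum.cong refl) (simp add: gA_def)
  also have "\<dots> = real (card Z) - 2 * real (card {x\<in>Z. x \<in> A})"
    using f by (simp add: sum_subtractf sum_distrib_left[symmetric] sum_ind)
  also have "{x\<in>Z. x \<in> A} = Z \<inter> A" by auto
  finally show ?thesis .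
qed

lemma swap_card:
  assumes "finite Z" "\<And>x. x \<in> Z \<Longrightarrow> h x \<in> Z" "\<And>x. x \<in> Z \<Longrightarrow> h (h x) = x"
    "\<And>x. x \<in> Z \<Longrightarrow> (h x \<in> A) = (x \<notin> A)"
  shows "card (Z \<inter> A) = card (Z - A)"
proof -
  have "inj_on h (Z \<inter> A)" by (rule inj_onI) (metis IntD1 assms(3))
  moreover have "h ` (Z \<inter> A) = Z - A"
  proof
    show "h ` (Z \<inter> A) \<subseteq> Z - A" using assms by auto
    show "Z - A \<subseteq> h ` (Z \<inter> A)"
    proof
      fix x assume x: "x \<in> Z - A"
      then have "h x \<in> Z \<inter> A" using assms by auto
      then show "x \<in> h ` (Z \<inter> A)" using assms(3) x by (metis DiffD1 image_eqI)
    qed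
  qed
  ultimately show ?thesis by (metis card_image)
qed

definition A0 :: "nat \<Rightarrow> nat set set" where "A0 n = {x \<in> F2vec n. 0 \<in> x}"

lemma flat_A0:
  assumes Q: "Q \<in> flats n d"
  shows "Q \<inter> A0 n = {} \<or> Q \<inter> A0 n = Q \<or> card (Q \<inter> A0 n) = card (Q - A0 n)"
proof (rule flatE[OF Q])
  fix x0 U v assume x0: "x0 \<in> F2vec n" and ls: "lin_subspace n U" and Qe: "Q = vadd x0 ` U"
  have QX: "Q \<subseteq> F2vec n" by (rule flat_subset[OF Q])
  have fQ: "finite Q" by (rule finite_subset[OF QX finite_F2vec])
  show ?thesis
  proof (cases "\<exists>u\<in>U. 0 \<in> u")
    case True
    then obtain u where u: "u \<in> U" "0 \<in> u" by auto
    have "card (Q \<inter> A0 n) = card (Q - A0 n)"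
    proof (rule swap_card[where h = "vadd u"])
      show "finite Q" by fact
      fix x assume x: "x \<in> Q"
      then obtain u' where u': "u' \<in> U" "x = vadd x0 u'" using Qe by auto
      have "vadd u x = vadd x0 (vadd u' u)" using u' by (auto simp: vadd_mem)
      moreover have "vadd u' u \<in> U" using ls u u' by (simp add: lin_subspace_def)
      ultimately show "vadd u x \<in> Q" using Qe by auto
      show "vadd u (vadd u x) = x" by simp
      have "vadd u x \<in> F2vec n" using x QX u ls by (intro F2vec_vadd) (auto simp: lin_subspace_def)
      then show "(vadd u x \<in> A0 n) = (x \<notin> A0 n)" using x QX u by (auto simp: A0_def vadd_mem)
    qed
    then show ?thesis by simp
  next
    case False
    then have "\<forall>y\<in>Q. (0 \<in> y) = (0 \<in> x0)" using Qe by (auto simp: vadd_mem)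
    then show ?thesis using QX by (cases "0 \<in> x0") (auto simp: A0_def)
  qed
qed

lemma X_A0: assumes "n \<ge> 1" shows "card (F2vec n \<inter> A0 n) = card (F2vec n - A0 n)"
proof (rule swap_card[where h = "vadd {0}"])
  have z: "{0} \<in> F2vec n" using assms by (auto simp: F2vec_def)
  fix x assume x: "x \<in> F2vec n"
  show "vadd {0} x \<in> F2vec n" using z x by (rule F2vec_vadd)
  then show "(vadd {0} x \<in> A0 n) = (x \<notin> A0 n)" using x by (auto simp: A0_def vadd_mem)
qed auto

definition unb :: "nat \<Rightarrow> nat \<Rightarrow> nat set set \<Rightarrow> nat" where
  "unb n d A = card {Q \<in> flats n d. card (Q \<inter> A) \<noteq> 2 ^ (d - 1)}"

lemma S_le:
  assumes d: "d \<ge> 1" and Q: "Q \<in> flats n d"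
  shows "(\<Sum>x\<in>Q. gA A x)^2 \<le> (if card (Q \<inter> A) \<noteq> 2 ^ (d - 1) then 4 ^ d else 0)"
    and "A = A0 n \<Longrightarrow> (\<Sum>x\<in>Q. gA A x)^2 = (if card (Q \<inter> A) \<noteq> 2 ^ (d - 1) then 4 ^ d else 0)"
proof -
  have QX: "Q \<subseteq> F2vec n" by (rule flat_subset[OF Q])
  have fQ: "finite Q" by (rule finite_subset[OF QX finite_F2vec])
  let ?k = "card (Q \<inter> A)"
  have cQ: "card Q = 2 ^ d" by (rule flat_card[OF Q])
  have S: "(\<Sum>x\<in>Q. gA A x) = 2 ^ d - 2 * real ?k" using sum_gA[OF fQ] cQ by simp
  have kle: "?k \<le> 2 ^ d" using cQ fQ by (metis card_mono inf_le1)
  have dd: "d = Suc (d - 1)" using d by simp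
  have p: "(2::real) ^ d = 2 * 2 ^ (d - 1)"
  proof -
    have "(2::real) ^ Suc (d - 1) = 2 * 2 ^ (d - 1)" by (rule power_Suc)
    then show ?thesis using dd by metis
  qed
  have pn: "(2::nat) ^ d = 2 * 2 ^ (d - 1)"
  proof -
    have "(2::nat) ^ Suc (d - 1) = 2 * 2 ^ (d - 1)" by (rule power_Suc)
    then show ?thesis using dd by metis
  qed
  have four: "(4::real) ^ d = (2 ^ d)^2"
    unfolding power2_eq_square power_mult_distrib[symmetric] by simp
  show "(\<Sum>x\<in>Q. gA A x)^2 \<le> (if ?k \<noteq> 2 ^ (d - 1) then 4 ^ d else 0)"
  proof (cases "?k = 2 ^ (d - 1)")
    case True then show ?thesis using S p by simp
  next
    case False
    have "real ?k \<le> real (2 ^ d)" using kle by (simp only: of_nat_le_iff)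
    then have "0 \<le> real ?k" "real ?k \<le> 2 ^ d" by simp_all
    then have "0 \<le> 4 * real ?k * (2 ^ d - real ?k)" by simp
    moreover have "(2 ^ d - 2 * real ?k)^2 = (2 ^ d)^2 - 4 * real ?k * (2 ^ d - real ?k)"
      by (simp add: power2_eq_square algebra_simps)
    ultimately have "(2 ^ d - 2 * real ?k)^2 \<le> (2 ^ d)^2" by linarith
    then show ?thesis using False S four by simp
  qed
  assume A: "A = A0 n"
  have "Q = (Q \<inter> A) \<union> (Q - A)" by blast
  then have "card Q = card ((Q \<inter> A) \<union> (Q - A))" by simp
  also have "\<dots> = card (Q \<inter> A) + card (Q - A)" by (rule card_Un_disjoint) (use fQ in auto)
  finally have "card (Q \<inter> A) + card (Q - A) = card Q" by simp
  then have "?k = 0 \<or> ?k = 2 ^ d \<or> ?k = 2 ^ (d - 1)" using flat_A0[OF Q] A cQ pn by auto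
  then show "(\<Sum>x\<in>Q. gA A x)^2 = (if ?k \<noteq> 2 ^ (d - 1) then 4 ^ d else 0)"
  proof (elim disjE)
    assume "?k = 0" then show ?thesis using S four d by simp
  next
    assume k: "?k = 2 ^ d"
    then have "?k \<noteq> 2 ^ (d - 1)" using pn by auto
    then show ?thesis using S four k by (simp add: power2_eq_square algebra_simps)
  next
    assume "?k = 2 ^ (d - 1)" then show ?thesis using S p by simp
  qed
qed




lemma key:
  assumes d: "d \<ge> 1" and n: "n \<ge> 1"
  defines "K \<equiv> real (card (flats n d)) * 2^d - real (cnt n d {} {0}) * 2^n"
  shows "A \<subseteq> F2vec n \<Longrightarrow> 4^d * real (unb n d A) \<ge> K"
    and "4^d * real (unb n d (A0 n)) = K"
    and "real (cnt n d {} {0}) * (2^n * 2^n - 2^n) = real (card (flats n d)) * (4^d - 2^d)"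
proof -
  let ?F = "flats n d" and ?X = "F2vec n" and ?c = "real (cnt n d {} {0})"
  have four: "(4::real) ^ d = (2 ^ d)^2"
    unfolding power2_eq_square power_mult_distrib[symmetric] by simp
  have U: "(\<Sum>Q\<in>?F. (if card (Q \<inter> A) \<noteq> 2 ^ (d - 1) then 4 ^ d else 0 :: real)) = 4^d * real (unb n d A)" for A
  proof -
    have "(\<Sum>Q\<in>?F. (if card (Q \<inter> A) \<noteq> 2 ^ (d - 1) then 4 ^ d else 0 :: real))
        = (\<Sum>Q\<in>?F. 4 ^ d * (if card (Q \<inter> A) \<noteq> 2 ^ (d - 1) then 1 else 0 :: real))"
      by (intro sum.cong refl) simp
    also have "\<dots> = 4 ^ d * (\<Sum>Q\<in>?F. (if card (Q \<inter> A) \<noteq> 2 ^ (d - 1) then 1 else 0 :: real))"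
      by (rule sum_distrib_left[symmetric])
    also have "\<dots> = 4^d * real (unb n d A)"
      unfolding unb_def by (subst sum_ind[OF flats_finite]) (rule refl)
    finally show ?thesis .
  qed
  have ss: "(\<Sum>Q\<in>?F. (\<Sum>x\<in>Q. gA A x)^2) = real (card ?F) * 2^d + ?c * ((\<Sum>x\<in>?X. gA A x)^2 - 2^n)" for A
    by (rule sumsq[OF n]) (rule gA_sq)
  have c0: "?c \<ge> 0" by simp
  show "A \<subseteq> F2vec n \<Longrightarrow> 4^d * real (unb n d A) \<ge> K"
  proof -
    have "(\<Sum>Q\<in>?F. (\<Sum>x\<in>Q. gA A x)^2) \<le> (\<Sum>Q\<in>?F. (if card (Q \<inter> A) \<noteq> 2 ^ (d - 1) then 4 ^ d else 0 :: real))"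
      by (intro sum_mono S_le(1)[OF d])
    moreover have "?c * ((\<Sum>x\<in>?X. gA A x)^2 - 2^n) \<ge> - ?c * 2^n"
    proof -
      have "?c * (\<Sum>x\<in>?X. gA A x)^2 \<ge> 0" using c0 by simp
      then show ?thesis by (simp add: algebra_simps)
    qed
    ultimately show ?thesis using U[of A] ss[of A] unfolding K_def by linarith
  qed
  have "(\<Sum>Q\<in>?F. (\<Sum>x\<in>Q. gA (A0 n) x)^2) = (\<Sum>Q\<in>?F. (if card (Q \<inter> A0 n) \<noteq> 2 ^ (d - 1) then 4 ^ d else 0 :: real))"
    by (intro sum.cong refl S_le(2)[OF d]) auto
  moreover have "(\<Sum>x\<in>?X. gA (A0 n) x) = 0"
  proof -
    have "card ?X = card (?X \<inter> A0 n) + card (?X - A0 n)"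
      by (metis Diff_Diff_Int card_Diff_subset_Int finite_F2vec finite_Int inf_le1 card_mono le_add_diff_inverse Int_commute)
    then show ?thesis using X_A0[OF n] by (simp add: sum_gA)
  qed
  ultimately show "4^d * real (unb n d (A0 n)) = K" using U[of "A0 n"] ss[of "A0 n"] unfolding K_def by simp
  have "(\<Sum>Q\<in>?F. (\<Sum>x\<in>Q. (\<lambda>_. 1::real) x)^2) = real (card ?F) * 2^d + ?c * ((\<Sum>x\<in>?X. (\<lambda>_. 1::real) x)^2 - 2^n)"
    by (rule sumsq[OF n]) simp
  moreover have "(\<Sum>Q\<in>?F. (\<Sum>x\<in>Q. (\<lambda>_. 1::real) x)^2) = real (card ?F) * 4^d"
    using flat_card four by simp
  ultimately show "?c * (2^n * 2^n - 2^n) = real (card ?F) * (4^d - 2^d)"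
    by (simp add: card_F2vec power2_eq_square algebra_simps)
qed

lemma lambda_formula:
  assumes d: "d \<ge> 1" and nd: "n \<ge> d"
  shows "lambda_n n d (2 ^ (d - 1)) = 1 - 1 / 2^d + (1 - 1 / 2^d) / (2^n - 1)"
proof -
  have n: "n \<ge> 1" using d nd by simp
  let ?F = "flats n d" and ?X = "F2vec n" and ?c = "real (cnt n d {} {0})"
  define F where "F = real (card ?F)"
  define K where "K = F * 2^d - ?c * 2^n"
  have Fpos: "F > 0" unfolding F_def using flats_nonempty[OF nd] flats_finite
    by (metis card_gt_0_iff empty_iff of_nat_0_less_iff)
  have lam: "lambdaA n d (2 ^ (d - 1)) A = 1 - real (unb n d A) / F" for A
  proof -
    have e: "?F = {Q \<in> ?F. card (Q \<inter> A) = 2 ^ (d - 1)} \<union> {Q \<in> ?F. card (Q \<inter> A) \<noteq> 2 ^ (d - 1)}"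
      by blast
    have "card ?F = card {Q \<in> ?F. card (Q \<inter> A) = 2 ^ (d - 1)} + card {Q \<in> ?F. card (Q \<inter> A) \<noteq> 2 ^ (d - 1)}"
      by (subst e, rule card_Un_disjoint) (use flats_finite in auto)
    then have "card ?F = card {Q \<in> ?F. card (Q \<inter> A) = 2 ^ (d - 1)} + unb n d A"
      unfolding unb_def .
    then show ?thesis unfolding lambdaA_def F_def using Fpos[unfolded F_def]
      by (simp add: field_simps)
  qed
  have k1: "\<And>A. A \<subseteq> ?X \<Longrightarrow> 4^d * real (unb n d A) \<ge> K"
    unfolding K_def F_def by (rule key(1)[OF d n])
  have k2: "4^d * real (unb n d (A0 n)) = K" unfolding K_def F_def by (rule key(2)[OF d n])
  have k3: "?c * (2^n * 2^n - 2^n) = F * (4^d - 2^d)" unfolding F_def by (rule key(3)[OF d n])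
  let ?M = "{lambdaA n d (2 ^ (d - 1)) A | A. A \<subseteq> ?X}"
  have "Max ?M = lambdaA n d (2 ^ (d - 1)) (A0 n)"
  proof (rule Max_eqI)
    have "?M = (\<lambda>A. lambdaA n d (2 ^ (d - 1)) A) ` Pow ?X" by auto
    then show "finite ?M" by simp
    show "lambdaA n d (2 ^ (d - 1)) (A0 n) \<in> ?M" by (auto simp: A0_def)
    fix y assume "y \<in> ?M"
    then obtain A where A: "A \<subseteq> ?X" "y = lambdaA n d (2 ^ (d - 1)) A" by auto
    have "real (unb n d (A0 n)) \<le> real (unb n d A)"
    proof -
      have "4^d * real (unb n d (A0 n)) \<le> 4^d * real (unb n d A)" using k1[OF A(1)] k2 by linarith
      then show ?thesis by (rule mult_left_le_imp_le) simp
    qed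
    then show "y \<le> lambdaA n d (2 ^ (d - 1)) (A0 n)" using A(2) lam Fpos
      by (simp add: divide_right_mono)
  qed
  then have "lambda_n n d (2 ^ (d - 1)) = lambdaA n d (2 ^ (d - 1)) (A0 n)"
    unfolding lambda_n_def .
  also have "\<dots> = 1 - real (unb n d (A0 n)) / F" by (rule lam)
  also have "real (unb n d (A0 n)) = K / 4^d" using k2 by (simp add: field_simps)
  also have "1 - K / 4^d / F = 1 - K / (4^d * F)" by simp
  also have "\<dots> = 1 - 1 / 2^d + (1 - 1 / 2^d) / (2^n - 1)"
  proof -
    have "(1::real) < 2^n" using n by (intro one_less_power) auto
    then have N: "(2::real)^n - 1 > 0" by simp
    have c: "?c * 2^n = F * (4^d - 2^d) / (2^n - 1)" using k3 N
      by (simp add: field_simps power2_eq_square)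
    have four: "(4::real) ^ d = 2 ^ d * 2 ^ d" unfolding power_mult_distrib[symmetric] by simp
    show ?thesis unfolding K_def c four using Fpos N by (simp add: field_simps)
  qed
  finally show ?thesis .
qed

theorem theorem1p4:
  fixes d :: nat
  assumes "d > 1"
  shows "(\<lambda>n. lambda_n n d (2 ^ (d - 1))) \<longlonglongrightarrow> 1 - 1 / 2 ^ d"
proof -
  have ev: "eventually (\<lambda>n. 1 - 1 / 2^d + (1 - 1 / 2^d) / (2^n - 1) = lambda_n n d (2 ^ (d - 1))) sequentially"
  proof (intro eventually_sequentiallyI[of d])
    fix n assume "d \<le> n"
    show "1 - 1 / 2^d + (1 - 1 / 2^d) / (2^n - 1) = lambda_n n d (2 ^ (d - 1))"
      by (rule lambda_formula[symmetric]) (use assms \<open>d \<le> n\<close> in auto)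
  qed
  have "(\<lambda>n. 1 - 1 / 2^d + (1 - 1 / 2^d) * (1 / (2^n - 1 :: real))) \<longlonglongrightarrow> 1 - 1 / 2^d + (1 - 1 / 2^d) * 0"
  proof (intro tendsto_intros)
    have "LIM n sequentially. (2::real) ^ n + (- 1) :> at_infinity"
      by (rule tendsto_add_filterlim_at_infinity'[OF filterlim_realpow_sequentially_gt1]) auto
    then show "(\<lambda>n. 1 / (2 ^ n - 1 :: real)) \<longlonglongrightarrow> 0"
      by (intro tendsto_divide_0[OF tendsto_const]) simp
  qed
  then have "(\<lambda>n. 1 - 1 / 2^d + (1 - 1 / 2^d) / (2^n - 1 :: real)) \<longlonglongrightarrow> 1 - 1 / 2^d" by simp
  then show ?thesis by (rule Lim_transform_eventually[OF _ ev])
qed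


end
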